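(* For every $k\ge0$ and every $j\in\{1,\dots,d\}$, the assignment $e_{(\gamma_1,\dots,\gamma_k)}\mapsto e_{(\gamma_1,\dots,\gamma_k,j)}$, $(\gamma_1,\dots,\gamma_k)\in\Lambda_k$, extends to a well-defined linear isometric embedding $J\colon\mathcal F_k\to\mathcal F_{k+1}$; equivalently, for all $\beta,\gamma\in\Lambda_k$, \[ (e_{(\beta_1,\dots,\beta_k,j)},e_{(\gamma_1,\dots,\gamma_k,j)})_{\mathcal F}=(e_\beta,e_\gamma)_{\mathcal F}. \]
   Context: Fix $d\ge 2$ and complex numbers $q_{ij}$, $1\le i\ne j\le d$, with $|q_{ij}|<1$ and $q_{ij}=\overline{q_{ji}}$. Let $W$ be the universal $C^*$-algebra generated by $s_1,\dots,s_d$ subject to $s_i^*s_i=I$ and $s_i^*s_j=q_{ij}s_js_i^*$ for $i\ne j$. Let $\Lambda_m=\{1,\dots,d\}^m$ (with $\Lambda_0=\{\emptyset\}$), $\Lambda^0=\bigcup_m\Lambda_m$; for finite $\alpha$, $s_\alpha=s_{\alpha_1}\cdots s_{\alpha_m}$, $s_\emptyset=I$. The Fock representation $\pi_F$ of $W$ acts on a Hilbert space $\mathcal F$ with unit vector $\Omega$ such that $\pi_F(s_j)^*\Omega=0$ for all $j$ and the vectors $e_\alpha=\pi_F(s_\alpha)\Omega$, $\alpha\in\Lambda^0$, span a dense subspace; $\mathcal F_k=\mathrm{span}\{e_\alpha:\alpha\in\Lambda_k\}$. *)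

theory Defs
  imports Complex_Main
begin

text \<open>Complex Hilbert spaces are not available in the distribution, so we describe one
  explicitly: a type 'h carrying an additive group structure, a complex scalar
  multiplication sm and an inner product ip (conjugate-linear in the first argument,
  linear in the second).\<close>

definition complex_inner_space ::
  "(complex \<Rightarrow> 'h::ab_group_add \<Rightarrow> 'h) \<Rightarrow> ('h \<Rightarrow> 'h \<Rightarrow> complex) \<Rightarrow> bool" where
  "complex_inner_space sm ip \<longleftrightarrow>
     (\<forall>a x y. sm a (x + y) = sm a x + sm a y) \<and>
     (\<forall>a b x. sm (a + b) x = sm a x + sm b x) \<and>
     (\<forall>a b x. sm a (sm b x) = sm (a * b) x) \<and>
     (\<forall>x. sm 1 x = x) \<and>
     (\<forall>x y z. ip x (y + z) = ip x y + ip x z) \<and>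
     (\<forall>a x y. ip x (sm a y) = a * ip x y) \<and>
     (\<forall>x y. ip y x = cnj (ip x y)) \<and>
     (\<forall>x. 0 \<le> Re (ip x x)) \<and>
     (\<forall>x. ip x x = 0 \<longrightarrow> x = 0)"

definition hnorm :: "('h \<Rightarrow> 'h \<Rightarrow> complex) \<Rightarrow> 'h \<Rightarrow> real" where
  "hnorm ip x = sqrt (Re (ip x x))"

definition complex_hilbert_space ::
  "(complex \<Rightarrow> 'h::ab_group_add \<Rightarrow> 'h) \<Rightarrow> ('h \<Rightarrow> 'h \<Rightarrow> complex) \<Rightarrow> bool" where
  "complex_hilbert_space sm ip \<longleftrightarrow> complex_inner_space sm ip \<and>
     (\<forall>X :: nat \<Rightarrow> 'h.
        (\<forall>\<epsilon>>0. \<exists>N. \<forall>m\<ge>N. \<forall>n\<ge>N. hnorm ip (X m - X n) < \<epsilon>) \<longrightarrow>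
        (\<exists>L. (\<lambda>n. hnorm ip (X n - L)) \<longlonglongrightarrow> 0))"

definition bounded_op_with_adjoint ::
  "(complex \<Rightarrow> 'h::ab_group_add \<Rightarrow> 'h) \<Rightarrow> ('h \<Rightarrow> 'h \<Rightarrow> complex) \<Rightarrow> ('h \<Rightarrow> 'h) \<Rightarrow> ('h \<Rightarrow> 'h) \<Rightarrow> bool" where
  "bounded_op_with_adjoint sm ip T Tadj \<longleftrightarrow>
     (\<forall>x y. T (x + y) = T x + T y) \<and> (\<forall>a x. T (sm a x) = sm a (T x)) \<and>
     (\<exists>C. \<forall>x. hnorm ip (T x) \<le> C * hnorm ip x) \<and>
     (\<forall>x y. ip (T x) y = ip x (Tadj y))"

definition hspan :: "(complex \<Rightarrow> 'h::ab_group_add \<Rightarrow> 'h) \<Rightarrow> 'h set \<Rightarrow> 'h set" where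
  "hspan sm S = {x. \<exists>F c. finite F \<and> F \<subseteq> S \<and> x = (\<Sum>v\<in>F. sm (c v) v)}"

definition hdense :: "('h::ab_group_add \<Rightarrow> 'h \<Rightarrow> complex) \<Rightarrow> 'h set \<Rightarrow> bool" where
  "hdense ip A \<longleftrightarrow> (\<forall>x. \<forall>\<epsilon>>0. \<exists>y\<in>A. hnorm ip (x - y) < \<epsilon>)"

text \<open>Multi-indices are lists over {1..d}; s_alpha = s_{alpha_1} ... s_{alpha_m}, so
  e_alpha = S alpha_1 (S alpha_2 (... (S alpha_m Omega))).\<close>
definition fock_vec :: "(nat \<Rightarrow> 'h \<Rightarrow> 'h) \<Rightarrow> 'h \<Rightarrow> nat list \<Rightarrow> 'h" where
  "fock_vec S \<Omega> \<alpha> = foldr S \<alpha> \<Omega>"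

definition Lambda :: "nat \<Rightarrow> nat \<Rightarrow> nat list set" where
  "Lambda d m = {\<alpha>. length \<alpha> = m \<and> set \<alpha> \<subseteq> {1..d}}"

end

theory Submission
  imports Defs "HOL-Library.Multiset"
begin

fun Dq :: "(nat \<Rightarrow> nat \<Rightarrow> complex) \<Rightarrow> nat \<Rightarrow> nat list \<Rightarrow> (complex \<times> nat list) list" where
  "Dq q b [] = []"
| "Dq q b (c#g) = (if b = c then [(1, g)] else map (\<lambda>p. (q b c * fst p, c # snd p)) (Dq q b g))"

lemma Dq_mem: "p \<in> set (Dq q b g) \<Longrightarrow> b \<in> set g \<and> mset (snd p) = mset g - {#b#} \<and> set (snd p) \<subseteq> set g"
proof (induction g arbitrary: p)
  case Nil then show ?case by simp
next
  case (Cons c g)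
  show ?case
  proof (cases "b = c")
    case True then show ?thesis using Cons by auto
  next
    case False
    then obtain p' where p': "p' \<in> set (Dq q b g)" "p = (q b c * fst p', c # snd p')" using Cons by auto
    from Cons.IH[OF p'(1)] p'(2) False show ?thesis by auto
  qed
qed

lemma Dq_snoc: "Dq q b (g @ [j]) = map (\<lambda>p. (fst p, snd p @ [j])) (Dq q b g) @
   (if b = j \<and> b \<notin> set g then [(prod_list (map (q b) g), g)] else [])"
  by (induction g) (auto simp: comp_def)

locale fk =
  fixes d :: nat and q :: "nat \<Rightarrow> nat \<Rightarrow> complex"
    and sm :: "complex \<Rightarrow> 'h::ab_group_add \<Rightarrow> 'h" and ip :: "'h \<Rightarrow> 'h \<Rightarrow> complex"
    and S Sadj :: "nat \<Rightarrow> 'h \<Rightarrow> 'h" and \<Omega> :: 'h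
  assumes inner: "complex_inner_space sm ip"
    and ops: "\<And>i. i \<in> {1..d} \<Longrightarrow> bounded_op_with_adjoint sm ip (S i) (Sadj i)"
    and isom: "\<And>i x. i \<in> {1..d} \<Longrightarrow> Sadj i (S i x) = x"
    and comm: "\<And>i j x. i \<in> {1..d} \<Longrightarrow> j \<in> {1..d} \<Longrightarrow> i \<noteq> j \<Longrightarrow>
                 Sadj i (S j x) = sm (q i j) (S j (Sadj i x))"
    and vac_unit: "ip \<Omega> \<Omega> = 1"
    and vac: "\<And>j. j \<in> {1..d} \<Longrightarrow> Sadj j \<Omega> = 0"
begin

abbreviation fe where "fe \<equiv> fock_vec S \<Omega>"

definition sL :: "(complex \<times> nat list) list \<Rightarrow> 'h" where
  "sL L = sum_list (map (\<lambda>p. sm (fst p) (fe (snd p))) L)"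

lemma sm_add: "sm a (x + y) = sm a x + sm a y" using inner unfolding complex_inner_space_def by blast
lemma sm_mult: "sm a (sm b x) = sm (a * b) x" using inner unfolding complex_inner_space_def by blast
lemma ip_add: "ip x (y + z) = ip x y + ip x z" using inner unfolding complex_inner_space_def by blast
lemma ip_sm: "ip x (sm a y) = a * ip x y" using inner unfolding complex_inner_space_def by blast

lemma sm_1: "sm 1 x = x" using inner unfolding complex_inner_space_def by blast
lemma sm_0: "sm a 0 = 0" using sm_add[of a 0 0] by simp
lemma ip_0: "ip x 0 = 0" using ip_add[of x 0 0] by simp

lemma S_add: "i \<in> {1..d} \<Longrightarrow> S i (x + y) = S i x + S i y"
  using ops unfolding bounded_op_with_adjoint_def by blast
lemma S_sm: "i \<in> {1..d} \<Longrightarrow> S i (sm a x) = sm a (S i x)"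
  using ops unfolding bounded_op_with_adjoint_def by blast
lemma S_adj: "i \<in> {1..d} \<Longrightarrow> ip (S i x) y = ip x (Sadj i y)"
  using ops unfolding bounded_op_with_adjoint_def by blast
lemma S_0: "i \<in> {1..d} \<Longrightarrow> S i 0 = 0" using S_add[of i 0 0] by simp

lemma fe_cons: "fe (c # g) = S c (fe g)" by (simp add: fock_vec_def)

lemma ip_sL: "ip x (sL L) = sum_list (map (\<lambda>p. fst p * ip x (fe (snd p))) L)"
  by (induction L) (auto simp: sL_def ip_0 ip_add ip_sm)

lemma S_sL: "c \<in> {1..d} \<Longrightarrow> sm a (S c (sL L)) = sL (map (\<lambda>p. (a * fst p, c # snd p)) L)"
  by (induction L) (auto simp: sL_def S_0 sm_0 S_add sm_add S_sm sm_mult fe_cons)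

lemma Sadj_fe: "b \<in> {1..d} \<Longrightarrow> set g \<subseteq> {1..d} \<Longrightarrow> Sadj b (fe g) = sL (Dq q b g)"
proof (induction g)
  case Nil then show ?case by (simp add: sL_def fock_vec_def vac)
next
  case (Cons c g)
  show ?case
  proof (cases "b = c")
    case True then show ?thesis using Cons by (simp add: fe_cons isom sL_def sm_1)
  next
    case False
    then show ?thesis using Cons by (simp add: fe_cons comm S_sL)
  qed
qed

lemma sl0: "(\<And>x. x \<in> set L \<Longrightarrow> f x = 0) \<Longrightarrow> sum_list (map f L) = (0::complex)"
  by (induction L) auto

lemma orth: "set a \<subseteq> {1..d} \<Longrightarrow> set g \<subseteq> {1..d} \<Longrightarrow> mset a \<noteq> mset g \<Longrightarrow> ip (fe a) (fe g) = 0"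
proof (induction a arbitrary: g)
  case Nil
  then obtain c g' where g: "g = c # g'" by (cases g) auto
  then have c: "c \<in> {1..d}" using Nil by auto
  have "ip \<Omega> (S c (fe g')) = cnj (ip (S c (fe g')) \<Omega>)"
    using inner unfolding complex_inner_space_def by blast
  also have "\<dots> = 0" using c by (simp add: S_adj vac ip_0)
  finally show ?case by (simp add: g fe_cons fock_vec_def)
next
  case (Cons b a')
  have b: "b \<in> {1..d}" using Cons by auto
  have "ip (fe (b # a')) (fe g) = sum_list (map (\<lambda>p. fst p * ip (fe a') (fe (snd p))) (Dq q b g))"
    using Cons b by (simp add: fe_cons S_adj Sadj_fe ip_sL)
  also have "\<dots> = 0"
  proof (rule sl0)
    fix p assume p: "p \<in> set (Dq q b g)"
    from Dq_mem[OF p] have m: "b \<in> set g" "mset (snd p) = mset g - {#b#}" "set (snd p) \<subseteq> set g" by auto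
    have "mset a' \<noteq> mset (snd p)"
    proof
      assume "mset a' = mset (snd p)"
      then have "mset (b # a') = add_mset b (mset g - {#b#})" using m by simp
      also have "\<dots> = mset g" using m(1) by simp
      finally show False using Cons.prems by simp
    qed
    then show "fst p * ip (fe a') (fe (snd p)) = 0" using Cons m by auto
  qed
  finally show ?case .
qed

lemma main: "j \<in> {1..d} \<Longrightarrow> set bt \<subseteq> {1..d} \<Longrightarrow> set g \<subseteq> {1..d} \<Longrightarrow> length g = length bt \<Longrightarrow>
   ip (fe (bt @ [j])) (fe (g @ [j])) = ip (fe bt) (fe g)"
proof (induction bt arbitrary: g)
  case Nil
  then show ?case by (simp add: fock_vec_def S_adj isom)
next
  case (Cons b a')
  have b: "b \<in> {1..d}" using Cons.prems by auto
  have sg: "set (g @ [j]) \<subseteq> {1..d}" using Cons.prems by auto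
  have "ip (fe ((b # a') @ [j])) (fe (g @ [j])) =
     sum_list (map (\<lambda>p. fst p * ip (fe (a' @ [j])) (fe (snd p))) (Dq q b (g @ [j])))"
    using Cons.prems b sg by (simp add: fe_cons S_adj Sadj_fe ip_sL)
  also have "\<dots> = sum_list (map (\<lambda>p. fst p * ip (fe (a' @ [j])) (fe (snd p @ [j]))) (Dq q b g))"
  proof -
    have z: "b = j \<and> b \<notin> set g \<Longrightarrow> ip (fe (a' @ [j])) (fe g) = 0"
      proof (rule orth)
      assume h: "b = j \<and> b \<notin> set g"
      show "mset (a' @ [j]) \<noteq> mset g"
      proof
        assume "mset (a' @ [j]) = mset g"
        then have "set (a' @ [j]) = set g" by (metis set_mset_mset)
        then show False using h by auto
      qed
    qed (use Cons.prems in auto)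
    show ?thesis
    proof (cases "b = j \<and> b \<notin> set g")
      case True
      then show ?thesis using z[OF True] by (simp add: Dq_snoc comp_def)
    next
      case False
      then show ?thesis by (simp only: Dq_snoc if_False append_Nil2 map_map comp_def fst_conv snd_conv)
    qed
  qed
  also have "\<dots> = sum_list (map (\<lambda>p. fst p * ip (fe a') (fe (snd p))) (Dq q b g))"
  proof (rule arg_cong[where f=sum_list], rule map_cong[OF refl])
    fix p assume p: "p \<in> set (Dq q b g)"
    from Dq_mem[OF p] have m: "b \<in> set g" "mset (snd p) = mset g - {#b#}" "set (snd p) \<subseteq> set g" by auto
    have "length (snd p) = size (mset g - {#b#})" using m(2) by (metis size_mset)
    also have "\<dots> = length g - 1" using m(1) by (simp add: size_Diff_singleton)
    finally have "length (snd p) = length g - 1" .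
    then have "length (snd p) = length a'" using Cons.prems by simp
    then show "fst p * ip (fe (a' @ [j])) (fe (snd p @ [j])) = fst p * ip (fe a') (fe (snd p))"
    proof -
      have "set (snd p) \<subseteq> {1..d}" using m(3) Cons.prems(3) by blast
      moreover have "set a' \<subseteq> {1..d}" using Cons.prems(2) by simp
      ultimately have "ip (fe (a' @ [j])) (fe (snd p @ [j])) = ip (fe a') (fe (snd p))"
        using Cons.IH[of "snd p"] Cons.prems(1) \<open>length (snd p) = length a'\<close> by blast
      then show ?thesis by simp
    qed
  qed
  also have "\<dots> = ip (fe (b # a')) (fe g)"
    using Cons.prems b by (simp add: fe_cons S_adj Sadj_fe ip_sL)
  finally show ?case .
qed

end

theorem mainTheorem2:
  fixes d :: nat and q :: "nat \<Rightarrow> nat \<Rightarrow> complex"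
    and sm :: "complex \<Rightarrow> 'h::ab_group_add \<Rightarrow> 'h" and ip :: "'h \<Rightarrow> 'h \<Rightarrow> complex"
    and S Sadj :: "nat \<Rightarrow> 'h \<Rightarrow> 'h" and \<Omega> :: 'h
  assumes d: "d \<ge> 2"
    and q_small: "\<And>i j. i \<in> {1..d} \<Longrightarrow> j \<in> {1..d} \<Longrightarrow> i \<noteq> j \<Longrightarrow> cmod (q i j) < 1"
    and q_herm: "\<And>i j. i \<in> {1..d} \<Longrightarrow> j \<in> {1..d} \<Longrightarrow> i \<noteq> j \<Longrightarrow> q i j = cnj (q j i)"
    and hilbert: "complex_hilbert_space sm ip"
    and ops: "\<And>i. i \<in> {1..d} \<Longrightarrow> bounded_op_with_adjoint sm ip (S i) (Sadj i)"
    and isom: "\<And>i x. i \<in> {1..d} \<Longrightarrow> Sadj i (S i x) = x"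
    and comm: "\<And>i j x. i \<in> {1..d} \<Longrightarrow> j \<in> {1..d} \<Longrightarrow> i \<noteq> j \<Longrightarrow>
                 Sadj i (S j x) = sm (q i j) (S j (Sadj i x))"
    and vac_unit: "ip \<Omega> \<Omega> = 1"
    and vac: "\<And>j. j \<in> {1..d} \<Longrightarrow> Sadj j \<Omega> = 0"
    and dense: "hdense ip (hspan sm (fock_vec S \<Omega> ` (\<Union>m. Lambda d m)))"
  shows "\<forall>k. \<forall>j\<in>{1..d}. \<forall>\<beta>\<in>Lambda d k. \<forall>\<gamma>\<in>Lambda d k.
           ip (fock_vec S \<Omega> (\<beta> @ [j])) (fock_vec S \<Omega> (\<gamma> @ [j])) =
           ip (fock_vec S \<Omega> \<beta>) (fock_vec S \<Omega> \<gamma>)"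
proof -
  interpret fk d q sm ip S Sadj \<Omega>
    using hilbert ops isom comm vac_unit vac unfolding complex_hilbert_space_def
    by unfold_locales auto
  show ?thesis unfolding Lambda_def
  proof (intro allI ballI)
    fix k j b g assume "j \<in> {1..d}" "b \<in> {\<alpha>. length \<alpha> = k \<and> set \<alpha> \<subseteq> {1..d}}"
      "g \<in> {\<alpha>. length \<alpha> = k \<and> set \<alpha> \<subseteq> {1..d}}"
    then show "ip (fock_vec S \<Omega> (b @ [j])) (fock_vec S \<Omega> (g @ [j])) = ip (fock_vec S \<Omega> b) (fock_vec S \<Omega> g)"
      using main[of j b g] by simp
  qed
qed

end
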